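(* Let $T$ be a tree that is not a path, let $\ell$ be a leaf of $T$, let $P_\ell$ be the path branch of $T$ containing $\ell$, let $v$ be the neighbor of $P_\ell$, and let $X \subseteq V(T)$ with $\ell \notin X$. Then \[ \mathcal{F}_{T,-X} = \mathcal{F}_{T,\ell,-X} + \mathcal{F}_{T - P_\ell,\, -(X\cup\{v\})}. \]
   Context: A fort of a graph $G$ is a nonempty set $F\subseteq V(G)$ such that every vertex outside $F$ is adjacent to either zero or at least two vertices of $F$; it is minimal if no proper subset is a fort. For a graph $H$ and a vertex set $A$, $\mathcal{F}_{H,-A}$ is the number of minimal forts of $H$ disjoint from $A$, and $\mathcal{F}_{H,\ell,-A}$ is the number of minimal forts of $H$ that contain $\ell$ and are disjoint from $A$. In a tree $T$, the path branch of a leaf $\ell$ is the maximal connected induced subgraph containing $\ell$ all of whose vertices have degree one or two in $T$; the neighbor of a path branch is the unique vertex not in the branch adjacent to a vertex of the branch (it exists when $T$ is not a path). *)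

theory Defs
  imports Main
begin

text \<open>Subgraphs induced on a
subset W of V are represented by (W, E): adjacency is always restricted to the
current vertex set.\<close>

definition simple_graph :: "'a set \<Rightarrow> ('a \<Rightarrow> 'a \<Rightarrow> bool) \<Rightarrow> bool" where
  "simple_graph V E \<longleftrightarrow> finite V \<and>
     (\<forall>u w. E u w \<longrightarrow> u \<in> V \<and> w \<in> V \<and> u \<noteq> w \<and> E w u)"

definition adj :: "'a set \<Rightarrow> ('a \<Rightarrow> 'a \<Rightarrow> bool) \<Rightarrow> 'a \<Rightarrow> 'a \<Rightarrow> bool" where
  "adj V E u w \<longleftrightarrow> u \<in> V \<and> w \<in> V \<and> E u w"

definition degree :: "'a set \<Rightarrow> ('a \<Rightarrow> 'a \<Rightarrow> bool) \<Rightarrow> 'a \<Rightarrow> nat" where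
  "degree V E u = card {w \<in> V. adj V E u w}"

definition connected_graph :: "'a set \<Rightarrow> ('a \<Rightarrow> 'a \<Rightarrow> bool) \<Rightarrow> bool" where
  "connected_graph V E \<longleftrightarrow> V \<noteq> {} \<and> (\<forall>u\<in>V. \<forall>w\<in>V. (adj V E)\<^sup>*\<^sup>* u w)"

definition is_cycle :: "'a set \<Rightarrow> ('a \<Rightarrow> 'a \<Rightarrow> bool) \<Rightarrow> 'a list \<Rightarrow> bool" where
  "is_cycle V E cs \<longleftrightarrow> length cs \<ge> 3 \<and> distinct cs \<and> set cs \<subseteq> V \<and>
     (\<forall>i. Suc i < length cs \<longrightarrow> adj V E (cs ! i) (cs ! Suc i)) \<and>
     adj V E (last cs) (hd cs)"

definition tree :: "'a set \<Rightarrow> ('a \<Rightarrow> 'a \<Rightarrow> bool) \<Rightarrow> bool" where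
  "tree V E \<longleftrightarrow> simple_graph V E \<and> connected_graph V E \<and> (\<nexists>cs. is_cycle V E cs)"

definition path_graph :: "'a set \<Rightarrow> ('a \<Rightarrow> 'a \<Rightarrow> bool) \<Rightarrow> bool" where
  "path_graph V E \<longleftrightarrow> tree V E \<and> (\<forall>u\<in>V. degree V E u \<le> 2)"

definition leaf :: "'a set \<Rightarrow> ('a \<Rightarrow> 'a \<Rightarrow> bool) \<Rightarrow> 'a \<Rightarrow> bool" where
  "leaf V E u \<longleftrightarrow> u \<in> V \<and> degree V E u = 1"

definition fort :: "'a set \<Rightarrow> ('a \<Rightarrow> 'a \<Rightarrow> bool) \<Rightarrow> 'a set \<Rightarrow> bool" where
  "fort V E F \<longleftrightarrow> F \<noteq> {} \<and> F \<subseteq> V \<and>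
     (\<forall>u \<in> V - F. card {w \<in> F. adj V E u w} \<noteq> 1)"

definition minimal_fort :: "'a set \<Rightarrow> ('a \<Rightarrow> 'a \<Rightarrow> bool) \<Rightarrow> 'a set \<Rightarrow> bool" where
  "minimal_fort V E F \<longleftrightarrow> fort V E F \<and> (\<forall>F'. F' \<subset> F \<longrightarrow> \<not> fort V E F')"

definition nforts_avoid :: "'a set \<Rightarrow> ('a \<Rightarrow> 'a \<Rightarrow> bool) \<Rightarrow> 'a set \<Rightarrow> nat" where
  "nforts_avoid V E A = card {F. minimal_fort V E F \<and> F \<inter> A = {}}"

definition nforts_with_avoid :: "'a set \<Rightarrow> ('a \<Rightarrow> 'a \<Rightarrow> bool) \<Rightarrow> 'a \<Rightarrow> 'a set \<Rightarrow> nat" where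
  "nforts_with_avoid V E l A = card {F. minimal_fort V E F \<and> l \<in> F \<and> F \<inter> A = {}}"

definition branch_candidate :: "'a set \<Rightarrow> ('a \<Rightarrow> 'a \<Rightarrow> bool) \<Rightarrow> 'a \<Rightarrow> 'a set \<Rightarrow> bool" where
  "branch_candidate V E l P \<longleftrightarrow> l \<in> P \<and> P \<subseteq> V \<and> connected_graph P E \<and>
     (\<forall>u\<in>P. degree V E u = 1 \<or> degree V E u = 2)"

definition path_branch :: "'a set \<Rightarrow> ('a \<Rightarrow> 'a \<Rightarrow> bool) \<Rightarrow> 'a \<Rightarrow> 'a set \<Rightarrow> bool" where
  "path_branch V E l P \<longleftrightarrow> leaf V E l \<and> branch_candidate V E l P \<and>
     (\<forall>Q. branch_candidate V E l Q \<and> P \<subseteq> Q \<longrightarrow> Q = P)"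

definition branch_neighbor :: "'a set \<Rightarrow> ('a \<Rightarrow> 'a \<Rightarrow> bool) \<Rightarrow> 'a set \<Rightarrow> 'a \<Rightarrow> bool" where
  "branch_neighbor V E P v \<longleftrightarrow> v \<in> V - P \<and> (\<exists>p\<in>P. adj V E v p) \<and>
     (\<forall>w \<in> V - P. (\<exists>p\<in>P. adj V E w p) \<longrightarrow> w = v)"

end

theory Submission
  imports Defs
begin

lemma reach_notin:
  assumes fin: "finite V" and sym: "\<And>u w. E u w \<Longrightarrow> E w u"
    and lf: "leaf V E l" and PV: "P \<subseteq> V"
    and deg: "\<forall>u\<in>P. degree V E u \<le> 2"
    and fo: "fort V E F" and lF: "l \<notin> F"
    and r: "(adj P E)\<^sup>*\<^sup>* l x"
  shows "x \<notin> F \<and> (x \<noteq> l \<longrightarrow> (\<exists>y. adj V E x y \<and> y \<notin> F))"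
  using r
proof (induction rule: rtranclp_induct)
  case base
  then show ?case using lF by simp
next
  case (step y z)
  have yF: "y \<notin> F" using step.IH by blast
  have yP: "y \<in> P" and zP: "z \<in> P" and Eyz: "E y z" using step.hyps(2) by (auto simp: adj_def)
  have FV: "F \<subseteq> V" using fo by (simp add: fort_def)
  have zF: "z \<notin> F"
  proof
    assume zF: "z \<in> F"
    define NF where "NF = {w\<in>F. adj V E y w}"
    define N where "N = {w\<in>V. adj V E y w}"
    have yV: "y \<in> V" using yP PV by auto
    have c1: "card NF \<noteq> 1" using fo yV yF unfolding fort_def NF_def by auto
    have finNF: "finite NF" using FV fin unfolding NF_def by (metis (no_types, lifting) finite_subset mem_Collect_eq subsetI)
    have zNF: "z \<in> NF" using zF Eyz yV zP PV unfolding NF_def adj_def by auto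
    have c2: "card NF \<ge> 2"
    proof -
      have "card NF \<noteq> 0" using finNF zNF by auto
      then show ?thesis using c1 by linarith
    qed
    have sub: "NF \<subseteq> N" using FV unfolding NF_def N_def by auto
    have finN: "finite N" using fin unfolding N_def by auto
    show False
    proof (cases "y = l")
      case True
      have "card N = 1" using lf True unfolding leaf_def degree_def N_def by auto
      then show False using card_mono[OF finN sub] c2 by linarith
    next
      case False
      then obtain w where w: "adj V E y w" "w \<notin> F" using step.IH by blast
      have "insert w NF \<subseteq> N" using sub w unfolding N_def adj_def by auto
      then have "card (insert w NF) \<le> card N" using finN card_mono by blast
      moreover have "card (insert w NF) = Suc (card NF)" using finNF w(2) unfolding NF_def by auto
      moreover have "card N \<le> 2" using deg yP unfolding degree_def N_def by auto
      ultimately show False using c2 by linarith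
    qed
  qed
  have "adj V E z y" using Eyz sym yP zP PV unfolding adj_def by auto
  then show ?case using zF yF by blast
qed

lemma core:
  assumes fin: "finite V" and sym: "\<And>u w. E u w \<Longrightarrow> E w u"
    and lf: "leaf V E l" and bc: "branch_candidate V E l P"
    and bn: "branch_neighbor V E P v"
    and fo: "fort V E F" and lF: "l \<notin> F"
  shows "F \<inter> P = {} \<and> v \<notin> F"
proof -
  have PV: "P \<subseteq> V" and lP: "l \<in> P" and con: "connected_graph P E"
    and deg: "\<forall>u\<in>P. degree V E u \<le> 2"
    using bc unfolding branch_candidate_def by auto
  have FP: "F \<inter> P = {}"
  proof (rule ccontr)
    assume "F \<inter> P \<noteq> {}"
    then obtain x where "x \<in> F" "x \<in> P" by auto
    then have "(adj P E)\<^sup>*\<^sup>* l x" using con lP unfolding connected_graph_def by auto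
    then show False using reach_notin[OF fin sym lf PV deg fo lF] \<open>x \<in> F\<close> by blast
  qed
  have "v \<notin> F"
  proof
    assume vF: "v \<in> F"
    obtain p where p: "p \<in> P" "adj V E v p" using bn unfolding branch_neighbor_def by auto
    have pV: "p \<in> V" using p PV by auto
    have "{w\<in>F. adj V E p w} = {v}"
    proof
      show "{v} \<subseteq> {w\<in>F. adj V E p w}" using vF p sym unfolding adj_def by auto
      show "{w\<in>F. adj V E p w} \<subseteq> {v}"
      proof
        fix w assume w: "w \<in> {w\<in>F. adj V E p w}"
        then have "w \<in> V - P" using FP by (auto simp: adj_def)
        moreover have "adj V E w p" using w sym unfolding adj_def by auto
        ultimately have "w = v" using bn p unfolding branch_neighbor_def by blast
        then show "w \<in> {v}" by simp
      qed
    qed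
    then have "card {w\<in>F. adj V E p w} = 1" by simp
    moreover have "p \<in> V - F" using pV p FP by auto
    ultimately show False using fo unfolding fort_def by blast
  qed
  then show ?thesis using FP by simp
qed

lemma fort_equiv:
  assumes fin: "finite V" and sym: "\<And>u w. E u w \<Longrightarrow> E w u"
    and lf: "leaf V E l" and bc: "branch_candidate V E l P"
    and bn: "branch_neighbor V E P v"
  shows "(fort V E F \<and> l \<notin> F) \<longleftrightarrow> (fort (V - P) E F \<and> v \<notin> F)"
proof
  assume a: "fort V E F \<and> l \<notin> F"
  then have c: "F \<inter> P = {} \<and> v \<notin> F" using core[OF fin sym lf bc bn] by blast
  have FV: "F \<subseteq> V" "F \<noteq> {}" using a by (auto simp: fort_def)
  have "\<forall>u \<in> (V - P) - F. card {w \<in> F. adj (V - P) E u w} \<noteq> 1"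
  proof
    fix u assume u: "u \<in> (V - P) - F"
    have "{w \<in> F. adj (V - P) E u w} = {w \<in> F. adj V E u w}"
      using u c FV unfolding adj_def by auto
    then show "card {w \<in> F. adj (V - P) E u w} \<noteq> 1" using a u unfolding fort_def by auto
  qed
  then show "fort (V - P) E F \<and> v \<notin> F" using c FV unfolding fort_def by auto
next
  assume a: "fort (V - P) E F \<and> v \<notin> F"
  have lP: "l \<in> P" using bc by (simp add: branch_candidate_def)
  have FV: "F \<subseteq> V - P" "F \<noteq> {}" using a by (auto simp: fort_def)
  have "\<forall>u \<in> V - F. card {w \<in> F. adj V E u w} \<noteq> 1"
  proof
    fix u assume u: "u \<in> V - F"
    show "card {w \<in> F. adj V E u w} \<noteq> 1"
    proof (cases "u \<in> P")
      case True
      have "{w \<in> F. adj V E u w} = {}"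
      proof (rule ccontr)
        assume "{w \<in> F. adj V E u w} \<noteq> {}"
        then obtain w where w: "w \<in> F" "adj V E u w" by auto
        have "w \<in> V - P" using w FV by auto
        moreover have "adj V E w u" using w sym unfolding adj_def by auto
        ultimately have "w = v" using bn True unfolding branch_neighbor_def by blast
        then show False using a w by simp
      qed
      then have "card {w \<in> F. adj V E u w} = 0" by (simp only: card.empty)
      then show ?thesis by simp
    next
      case False
      have "{w \<in> F. adj (V - P) E u w} = {w \<in> F. adj V E u w}"
        using u False FV unfolding adj_def by auto
      moreover have "u \<in> (V - P) - F" using u False by auto
      ultimately show ?thesis using a unfolding fort_def by metis
    qed
  qed
  then show "fort V E F \<and> l \<notin> F" using FV lP unfolding fort_def by auto
qed

lemma min_equiv:
  assumes fin: "finite V" and sym: "\<And>u w. E u w \<Longrightarrow> E w u"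
    and lf: "leaf V E l" and bc: "branch_candidate V E l P"
    and bn: "branch_neighbor V E P v"
  shows "(minimal_fort V E F \<and> l \<notin> F) \<longleftrightarrow> (minimal_fort (V - P) E F \<and> v \<notin> F)"
  using fort_equiv[OF fin sym lf bc bn] unfolding minimal_fort_def
  by (metis psubsetD)

theorem mainTheorem12:
  fixes V :: "'a set" and E :: "'a \<Rightarrow> 'a \<Rightarrow> bool" and l v :: 'a and P X :: "'a set"
  assumes "tree V E"
    and "\<not> path_graph V E"
    and "leaf V E l"
    and "path_branch V E l P"
    and "branch_neighbor V E P v"
    and "X \<subseteq> V"
    and "l \<notin> X"
  shows "nforts_avoid V E X = nforts_with_avoid V E l X + nforts_avoid (V - P) E (X \<union> {v})"
proof -
  have fin: "finite V" and sym: "\<And>u w. E u w \<Longrightarrow> E w u"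
    using assms(1) unfolding tree_def simple_graph_def by auto
  have bc: "branch_candidate V E l P" using assms(4) by (simp add: path_branch_def)
  define S1 where "S1 = {F. minimal_fort V E F \<and> l \<in> F \<and> F \<inter> X = {}}"
  define S2 where "S2 = {F. minimal_fort V E F \<and> l \<notin> F \<and> F \<inter> X = {}}"
  have S: "{F. minimal_fort V E F \<and> F \<inter> X = {}} = S1 \<union> S2" unfolding S1_def S2_def by auto
  have S2': "S2 = {F. minimal_fort (V - P) E F \<and> F \<inter> (X \<union> {v}) = {}}"
    unfolding S2_def using min_equiv[OF fin sym assms(3) bc assms(5)] by auto
  have finPow: "finite {F. minimal_fort V E F \<and> F \<inter> X = {}}"
    by (rule finite_subset[of _ "Pow V"]) (auto simp: minimal_fort_def fort_def fin)
  have f1: "finite S1" "finite S2" using finPow S by (auto intro: finite_subset)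
  have "card (S1 \<union> S2) = card S1 + card S2"
    by (rule card_Un_disjoint) (use f1 in \<open>auto simp: S1_def S2_def\<close>)
  then show ?thesis unfolding nforts_avoid_def nforts_with_avoid_def S S2'[symmetric] S1_def by simp
qed

end
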